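(* Let $G$ be the graph with vertex set $\{a_i,b_i,c_i : i\in[4]\}\cup\{q_i^j,r_i^j : i\in[4], j\in[2]\}$ and edges: the three four-cycles $A$: $a_ia_{i\bmod 4+1}$, $B$: $b_ib_{i\bmod 4+1}$, $C$: $c_ic_{i\bmod 4+1}$ ($i\in[4]$); $q_i^j a_k, q_i^j b_k, q_i^j c_k$ for all $i,k\in[4]$, $j\in[2]$; $r_i^jq_i^j$; and $r_i^ja_i, r_i^ja_{i\bmod 4+1}, r_i^jb_i, r_i^jb_{i\bmod 4+1}, r_i^jc_i, r_i^jc_{i\bmod 4+1}$ for $i\in[4],j\in[2]$. Call $\{q_i^j,r_i^j\}$ an apex pair. In any planar geometric storyplan of $G$ there exist at least 6 frames, each containing (all vertices of) a different apex pair and all vertices of the four-cycles $A$, $B$, $C$.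
   Context: A storyplan of a graph $G$ on time steps $[\ell]$ is a pair $(A,\mathcal{D})$ where $A$ assigns to each vertex $v$ a nonempty interval $A(v)\subseteq[\ell]$ of consecutive integers ($v$ is visible at each $t\in A(v)$), adjacent vertices have intersecting intervals, and $\mathcal{D}$ assigns one fixed point to each vertex and one fixed curve to each edge. The frame at $t$ is the drawing under $\mathcal{D}$ of $G[\{v : t\in A(v)\}]$; a frame contains a vertex if the vertex is visible at $t$. The storyplan is planar geometric if every frame is a planar drawing with all edges straight-line segments. *)

theory Defs
  imports "HOL-Analysis.Analysis"
begin

text \<open>Vertices a_i, b_i, c_i (i in [4]) and q_i^j, r_i^j (i in [4], j in [2]).
  Constructor arguments outside these ranges are not vertices of G.\<close>

datatype gv = Av nat | Bv nat | Cv nat | Qv nat nat | Rv nat nat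

definition nxt :: "nat \<Rightarrow> nat" where "nxt i = i mod 4 + 1"

definition G_verts :: "gv set" where
  "G_verts = {Av i | i. i \<in> {1..4}} \<union> {Bv i | i. i \<in> {1..4}} \<union> {Cv i | i. i \<in> {1..4}}
     \<union> {Qv i j | i j. i \<in> {1..4} \<and> j \<in> {1..2}} \<union> {Rv i j | i j. i \<in> {1..4} \<and> j \<in> {1..2}}"

definition G_edges :: "gv set set" where
  "G_edges =
     {{Av i, Av (nxt i)} | i. i \<in> {1..4}}
   \<union> {{Bv i, Bv (nxt i)} | i. i \<in> {1..4}}
   \<union> {{Cv i, Cv (nxt i)} | i. i \<in> {1..4}}
   \<union> {{Qv i j, Av k} | i j k. i \<in> {1..4} \<and> j \<in> {1..2} \<and> k \<in> {1..4}}
   \<union> {{Qv i j, Bv k} | i j k. i \<in> {1..4} \<and> j \<in> {1..2} \<and> k \<in> {1..4}}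
   \<union> {{Qv i j, Cv k} | i j k. i \<in> {1..4} \<and> j \<in> {1..2} \<and> k \<in> {1..4}}
   \<union> {{Rv i j, Qv i j} | i j. i \<in> {1..4} \<and> j \<in> {1..2}}
   \<union> {{Rv i j, Av i} | i j. i \<in> {1..4} \<and> j \<in> {1..2}}
   \<union> {{Rv i j, Av (nxt i)} | i j. i \<in> {1..4} \<and> j \<in> {1..2}}
   \<union> {{Rv i j, Bv i} | i j. i \<in> {1..4} \<and> j \<in> {1..2}}
   \<union> {{Rv i j, Bv (nxt i)} | i j. i \<in> {1..4} \<and> j \<in> {1..2}}
   \<union> {{Rv i j, Cv i} | i j. i \<in> {1..4} \<and> j \<in> {1..2}}
   \<union> {{Rv i j, Cv (nxt i)} | i j. i \<in> {1..4} \<and> j \<in> {1..2}}"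

definition cycle_verts :: "gv set" where
  "cycle_verts = {Av i | i. i \<in> {1..4}} \<union> {Bv i | i. i \<in> {1..4}} \<union> {Cv i | i. i \<in> {1..4}}"

definition storyplan_intervals :: "'v set \<Rightarrow> 'v set set \<Rightarrow> nat \<Rightarrow> ('v \<Rightarrow> nat set) \<Rightarrow> bool" where
  "storyplan_intervals V E l I \<longleftrightarrow>
     (\<forall>v\<in>V. I v \<noteq> {} \<and> I v \<subseteq> {1..l} \<and> (\<exists>s t. I v = {s..t})) \<and>
     (\<forall>e\<in>E. \<forall>u v. e = {u, v} \<longrightarrow> I u \<inter> I v \<noteq> {})"

definition frame_verts :: "'v set \<Rightarrow> ('v \<Rightarrow> nat set) \<Rightarrow> nat \<Rightarrow> 'v set" where
  "frame_verts V I t = {v \<in> V. t \<in> I v}"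

definition frame_edges :: "'v set set \<Rightarrow> ('v \<Rightarrow> nat set) \<Rightarrow> nat \<Rightarrow> 'v set set" where
  "frame_edges E I t = {e \<in> E. \<forall>v\<in>e. t \<in> I v}"

definition planar_straight_line :: "'v set \<Rightarrow> 'v set set \<Rightarrow> ('v \<Rightarrow> real^2) \<Rightarrow> bool" where
  "planar_straight_line W F p \<longleftrightarrow>
     inj_on p W \<and>
     (\<forall>e\<in>F. \<forall>u v. e = {u, v} \<longrightarrow> (\<forall>w\<in>W. w \<notin> e \<longrightarrow> p w \<notin> closed_segment (p u) (p v))) \<and>
     (\<forall>e\<in>F. \<forall>f\<in>F. \<forall>u v x y. e = {u, v} \<longrightarrow> f = {x, y} \<longrightarrow> e \<noteq> f \<longrightarrow>
        closed_segment (p u) (p v) \<inter> closed_segment (p x) (p y) \<subseteq> p ` (e \<inter> f))"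

text \<open>Planar geometric storyplan (A, D) on [l]: D places each vertex at a fixed point p v
  and each edge as the straight segment between its endpoints; every frame is planar.\<close>
definition planar_geometric_storyplan ::
  "'v set \<Rightarrow> 'v set set \<Rightarrow> nat \<Rightarrow> ('v \<Rightarrow> nat set) \<Rightarrow> ('v \<Rightarrow> real^2) \<Rightarrow> bool" where
  "planar_geometric_storyplan V E l I p \<longleftrightarrow>
     storyplan_intervals V E l I \<and>
     (\<forall>t\<in>{1..l}. planar_straight_line (frame_verts V I t) (frame_edges E I t) p)"

end

theory Submission
  imports Defs "HOL-Complex_Analysis.Complex_Analysis"
begin

definition oarc :: "(real \<Rightarrow> complex) \<Rightarrow> complex set" where
  "oarc g = path_image g - {pathstart g, pathfinish g}"

lemma arc_oarc:
  assumes "arc g"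
  shows "connected (oarc g)" "path_image g \<subseteq> closure (oarc g)" "oarc g \<noteq> {}"
proof -
  have inj: "inj_on g {0..1}" and pg: "path g" using assms by (auto simp: arc_def)
  have eq: "oarc g = g ` {0<..<1}"
  proof
    show "oarc g \<subseteq> g ` {0<..<1}"
      by (auto simp: oarc_def path_image_def pathstart_def pathfinish_def)
        (metis atLeastAtMost_iff greaterThanLessThan_iff image_eqI less_eq_real_def)
    show "g ` {0<..<1} \<subseteq> oarc g"
      using inj unfolding oarc_def path_image_def pathstart_def pathfinish_def inj_on_def
      by fastforce
  qed
  have cont: "continuous_on {0..1} g" using pg by (simp add: path_def)
  show "connected (oarc g)" unfolding eq
    by (rule connected_continuous_image) (auto intro: continuous_on_subset[OF cont])
  have "g ` closure {0<..<1::real} \<subseteq> closure (g ` {0<..<1})"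
    by (rule image_closure_subset) (auto simp: cont intro!: closure_subset[THEN subsetD])
  then show "path_image g \<subseteq> closure (oarc g)" by (simp add: eq path_image_def)
  show "oarc g \<noteq> {}" unfolding eq by auto
qed

lemma conn_side:
  fixes K :: "complex set"
  assumes "connected S" "S \<inter> K = {}" "closed K"
  shows "S \<subseteq> inside K \<or> S \<subseteq> outside K"
proof -
  have "inside K \<inter> S = {} \<or> outside K \<inter> S = {}"
    by (rule connectedD[OF assms(1) open_inside[OF assms(3)] open_outside[OF assms(3)]])
       (use assms(2) inside_Un_outside[of K] in auto)
  then show ?thesis using assms(2) inside_Un_outside[of K] by blast
qed

lemma conn_two:
  fixes S :: "complex set"
  assumes "connected S" "S \<subseteq> U \<union> V" "open U" "open V" "U \<inter> V \<inter> S = {}"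
  shows "S \<subseteq> U \<or> S \<subseteq> V"
  using connectedD[OF assms(1) assms(3) assms(4)] assms by blast

lemma loop_props:
  fixes c1 c2 :: "real \<Rightarrow> complex"
  assumes "arc c1" "arc c2" "pathstart c1 = a" "pathstart c2 = a"
    "pathfinish c1 = b" "pathfinish c2 = b" "path_image c1 \<inter> path_image c2 = {a,b}"
  shows "simple_path (c1 +++ reversepath c2)"
    "pathfinish (c1 +++ reversepath c2) = pathstart (c1 +++ reversepath c2)"
    "path_image (c1 +++ reversepath c2) = path_image c1 \<union> path_image c2"
    "path (c1 +++ reversepath c2)"
proof -
  show "simple_path (c1 +++ reversepath c2)"
    by (rule simple_path_join_loop) (use assms in \<open>auto simp: arc_reversepath\<close>)
  then show "path (c1 +++ reversepath c2)" by (simp add: simple_path_imp_path)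
  show "pathfinish (c1 +++ reversepath c2) = pathstart (c1 +++ reversepath c2)"
    using assms by simp
  show "path_image (c1 +++ reversepath c2) = path_image c1 \<union> path_image c2"
    using assms by (simp add: path_image_join)
qed

lemma loop_wn:
  fixes c1 c2 :: "real \<Rightarrow> complex"
  assumes "arc c1" "arc c2" "pathstart c1 = a" "pathstart c2 = a"
    "pathfinish c1 = b" "pathfinish c2 = b" "path_image c1 \<inter> path_image c2 = {a,b}"
    "z \<notin> path_image c1" "z \<notin> path_image c2"
  shows "winding_number (c1 +++ reversepath c2) z = winding_number c1 z - winding_number c2 z"
    "winding_number (c1 +++ reversepath c2) z \<in> {-1,0,1}"
    "winding_number (c1 +++ reversepath c2) z \<noteq> 0 \<longleftrightarrow> z \<in> inside (path_image c1 \<union> path_image c2)"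
proof -
  have p: "path c1" "path c2" using assms arc_imp_path by auto
  show "winding_number (c1 +++ reversepath c2) z = winding_number c1 z - winding_number c2 z"
    using assms p by (simp add: winding_number_join winding_number_reversepath)
  note L = loop_props[OF assms(1-7)]
  show "winding_number (c1 +++ reversepath c2) z \<in> {-1,0,1}"
    by (rule simple_closed_path_winding_number_cases) (use L assms in auto)
  show "winding_number (c1 +++ reversepath c2) z \<noteq> 0 \<longleftrightarrow> z \<in> inside (path_image c1 \<union> path_image c2)"
  proof
    assume "winding_number (c1 +++ reversepath c2) z \<noteq> 0"
    moreover have "z \<in> outside (path_image c1 \<union> path_image c2) \<Longrightarrow> winding_number (c1 +++ reversepath c2) z = 0"
      using winding_number_zero_in_outside[OF L(4) L(2)] L(3) by simp
    ultimately show "z \<in> inside (path_image c1 \<union> path_image c2)"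
      using inside_Un_outside[of "path_image c1 \<union> path_image c2"] assms(8,9) by blast
  next
    assume "z \<in> inside (path_image c1 \<union> path_image c2)"
    then show "winding_number (c1 +++ reversepath c2) z \<noteq> 0"
      using simple_closed_path_winding_number_inside[OF L(1)] L(3) by (metis one_neq_zero neg_equal_0_iff_equal)
  qed
qed

lemma jordan_facts:
  fixes c1 c2 :: "real \<Rightarrow> complex"
  assumes "arc c1" "arc c2" "pathstart c1 = a" "pathstart c2 = a"
    "pathfinish c1 = b" "pathfinish c2 = b" "path_image c1 \<inter> path_image c2 = {a,b}"
  shows "open (inside (path_image c1 \<union> path_image c2))"
    "connected (inside (path_image c1 \<union> path_image c2))"
    "inside (path_image c1 \<union> path_image c2) \<noteq> {}"
    "path_image c1 \<union> path_image c2 \<subseteq> closure (inside (path_image c1 \<union> path_image c2))"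
    "closed (path_image c1 \<union> path_image c2)"
    "closure (inside (path_image c1 \<union> path_image c2)) \<subseteq> path_image c1 \<union> path_image c2 \<union> inside (path_image c1 \<union> path_image c2)"
proof -
  note L = loop_props[OF assms]
  note J = Jordan_inside_outside[OF L(1) L(2), unfolded L(3)]
  show "open (inside (path_image c1 \<union> path_image c2))"
    "connected (inside (path_image c1 \<union> path_image c2))"
    "inside (path_image c1 \<union> path_image c2) \<noteq> {}" using J by auto
  show "path_image c1 \<union> path_image c2 \<subseteq> closure (inside (path_image c1 \<union> path_image c2))"
    using J frontier_closures by (metis Int_lower1)
  show cl: "closed (path_image c1 \<union> path_image c2)"
    using assms arc_imp_path closed_path_image by blast
  show "closure (inside (path_image c1 \<union> path_image c2)) \<subseteq> path_image c1 \<union> path_image c2 \<union> inside (path_image c1 \<union> path_image c2)"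
    using closure_inside_subset[OF cl] by blast
qed

lemma theta3:
  fixes c1 c2 c3 :: "real \<Rightarrow> complex"
  assumes arcs: "arc c1" "arc c2" "arc c3"
    and s: "pathstart c1 = a" "pathstart c2 = a" "pathstart c3 = a"
    and f: "pathfinish c1 = b" "pathfinish c2 = b" "pathfinish c3 = b"
    and i12: "path_image c1 \<inter> path_image c2 = {a,b}"
    and i13: "path_image c1 \<inter> path_image c3 = {a,b}"
    and i23: "path_image c2 \<inter> path_image c3 = {a,b}"
  shows "oarc c3 \<subseteq> inside (path_image c1 \<union> path_image c2) \<or>
         oarc c2 \<subseteq> inside (path_image c1 \<union> path_image c3) \<or>
         oarc c1 \<subseteq> inside (path_image c2 \<union> path_image c3)"
proof (rule ccontr)
  let ?P1 = "path_image c1" let ?P2 = "path_image c2" let ?P3 = "path_image c3"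
  assume neg: "\<not> ?thesis"
  note J12 = jordan_facts[OF arcs(1,2) s(1,2) f(1,2) i12]
  note J13 = jordan_facts[OF arcs(1,3) s(1,3) f(1,3) i13]
  note J23 = jordan_facts[OF arcs(2,3) s(2,3) f(2,3) i23]
  have o3: "oarc c3 \<inter> (?P1 \<union> ?P2) = {}" using i13 i23 s f by (auto simp: oarc_def)
  have o2: "oarc c2 \<inter> (?P1 \<union> ?P3) = {}" using i12 i23 s f by (auto simp: oarc_def)
  have o1: "oarc c1 \<inter> (?P2 \<union> ?P3) = {}" using i12 i13 s f by (auto simp: oarc_def)
  have "oarc c3 \<subseteq> inside (?P1 \<union> ?P2) \<or> oarc c3 \<subseteq> outside (?P1 \<union> ?P2)"
    by (rule conn_side[OF arc_oarc(1)[OF arcs(3)] o3 J12(5)])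
  with neg have out3: "oarc c3 \<subseteq> outside (?P1 \<union> ?P2)" by blast
  have key: "z \<in> inside (?P1 \<union> ?P3) \<union> inside (?P2 \<union> ?P3) \<and>
      z \<notin> inside (?P1 \<union> ?P3) \<inter> inside (?P2 \<union> ?P3)" if z: "z \<in> inside (?P1 \<union> ?P2)" for z
  proof -
    have z12: "z \<notin> ?P1" "z \<notin> ?P2" using z inside_no_overlap by blast+
    have "a \<in> ?P1" "b \<in> ?P1" using s f pathstart_in_path_image pathfinish_in_path_image by metis+
    have z3: "z \<notin> ?P3"
    proof
      assume "z \<in> ?P3"
      moreover have "z \<noteq> a" "z \<noteq> b" using z12 \<open>a \<in> ?P1\<close> \<open>b \<in> ?P1\<close> by auto
      ultimately have "z \<in> oarc c3" using s f by (simp add: oarc_def)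
      then have "z \<in> outside (?P1 \<union> ?P2)" using out3 by blast
      then show False using z inside_Int_outside by blast
    qed
    note W12 = loop_wn[OF arcs(1,2) s(1,2) f(1,2) i12 z12]
    note W13 = loop_wn[OF arcs(1,3) s(1,3) f(1,3) i13 z12(1) z3]
    note W23 = loop_wn[OF arcs(2,3) s(2,3) f(2,3) i23 z12(2) z3]
    have nz: "winding_number (c1 +++ reversepath c2) z \<noteq> 0" using W12(3) z by blast
    have eq: "winding_number (c1 +++ reversepath c2) z =
      winding_number (c1 +++ reversepath c3) z - winding_number (c2 +++ reversepath c3) z"
      using W12(1) W13(1) W23(1) by simp
    have "winding_number (c1 +++ reversepath c3) z \<noteq> 0 \<or> winding_number (c2 +++ reversepath c3) z \<noteq> 0"
      using eq nz by auto
    moreover have "\<not> (winding_number (c1 +++ reversepath c3) z \<noteq> 0 \<and> winding_number (c2 +++ reversepath c3) z \<noteq> 0)"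
      using eq nz W12(2) W13(2) W23(2) by auto
    ultimately show ?thesis using W13(3) W23(3) by blast
  qed
  have "inside (?P1 \<union> ?P2) \<subseteq> inside (?P1 \<union> ?P3) \<or> inside (?P1 \<union> ?P2) \<subseteq> inside (?P2 \<union> ?P3)"
    by (rule conn_two[OF J12(2) _ J13(1) J23(1)]) (use key in blast)+
  then show False
  proof
    assume sub: "inside (?P1 \<union> ?P2) \<subseteq> inside (?P1 \<union> ?P3)"
    have "oarc c2 \<subseteq> closure (inside (?P1 \<union> ?P3))"
      using J12(4) closure_mono[OF sub] by (auto simp: oarc_def)
    then have "oarc c2 \<subseteq> inside (?P1 \<union> ?P3)" using J13(6) o2 by blast
    then show False using neg by blast
  next
    assume sub: "inside (?P1 \<union> ?P2) \<subseteq> inside (?P2 \<union> ?P3)"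
    have "oarc c1 \<subseteq> closure (inside (?P2 \<union> ?P3))"
      using J12(4) closure_mono[OF sub] by (auto simp: oarc_def)
    then have "oarc c1 \<subseteq> inside (?P2 \<union> ?P3)" using J23(6) o1 by blast
    then show False using neg by blast
  qed
qed

lemma outside_sub:
  fixes h1 h2 e :: "real \<Rightarrow> complex"
  assumes arcs: "arc h1" "arc h2" "arc e"
    and s: "pathstart h1 = a" "pathstart h2 = a" "pathstart e = a"
    and f: "pathfinish h1 = b" "pathfinish h2 = b" "pathfinish e = b"
    and ab: "a \<noteq> b"
    and i12: "path_image h1 \<inter> path_image h2 = {a,b}"
    and i13: "path_image h1 \<inter> path_image e = {a,b}"
    and i23: "path_image h2 \<inter> path_image e = {a,b}"
    and ins: "oarc h1 \<subseteq> inside (path_image h2 \<union> path_image e)"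
    and F: "connected F" "u \<in> closure F" "v \<in> closure F"
    and uv: "u \<in> oarc h1" "v \<in> oarc h2"
    and Fd: "F \<inter> (path_image h1 \<union> path_image h2 \<union> path_image e) = {}"
    and Fo: "F \<subseteq> outside (path_image h1 \<union> path_image h2)"
  shows False
proof -
  let ?P1 = "path_image h1" let ?P2 = "path_image h2" let ?Pe = "path_image e"
  have ne: "?P1 \<inter> inside (?P2 \<union> ?Pe) \<noteq> {}"
    using arc_oarc(3)[OF arcs(1)] ins by (auto simp: oarc_def)
  obtain d: "inside (?P2 \<union> ?P1) \<inter> inside (?Pe \<union> ?P1) = {}"
     and un: "inside (?P2 \<union> ?P1) \<union> inside (?Pe \<union> ?P1) \<union> (?P1 - {a,b}) = inside (?P2 \<union> ?Pe)"
    by (rule split_inside_simple_closed_curve[of h2 a b e h1])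
       (use arcs s f ab i12 i13 i23 ne arc_imp_simple_path in \<open>auto simp: Int_commute\<close>)
  note J2e = jordan_facts[OF arcs(2,3) s(2,3) f(2,3) i23]
  have eh1: "path_image e \<inter> path_image h1 = {a,b}" using i13 by blast
  note Je1 = jordan_facts[OF arcs(3,1) s(3,1) f(3,1) eh1]
  have uin: "u \<in> inside (?P2 \<union> ?Pe)" using uv ins by blast
  have "F \<inter> inside (?P2 \<union> ?Pe) \<noteq> {}"
    using open_Int_closure_eq_empty[OF J2e(1), of F] uin F(2) by blast
  moreover have "F \<subseteq> inside (?P2 \<union> ?Pe) \<or> F \<subseteq> outside (?P2 \<union> ?Pe)"
    by (rule conn_side[OF F(1) _ J2e(5)]) (use Fd in blast)
  ultimately have "F \<subseteq> inside (?P2 \<union> ?Pe)" using inside_Int_outside by blast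
  moreover have "F \<inter> inside (?P2 \<union> ?P1) = {}"
    using Fo inside_Int_outside by (metis (no_types, lifting) Int_commute Un_commute disjoint_iff subsetD)
  ultimately have "F \<subseteq> inside (?Pe \<union> ?P1)" using un Fd by blast
  then have "v \<in> closure (inside (?Pe \<union> ?P1))" using F(3) closure_mono by blast
  then have "v \<in> ?Pe \<union> ?P1 \<union> inside (?Pe \<union> ?P1)" using Je1(6) by blast
  moreover have "v \<notin> ?Pe" "v \<notin> ?P1" "v \<in> ?P2" using uv i12 i23 s f by (auto simp: oarc_def)
  moreover have "v \<notin> inside (?P2 \<union> ?Pe)" using \<open>v \<in> ?P2\<close> inside_no_overlap by blast
  ultimately show False using un by blast
qed

lemma chords:
  fixes h1 h2 e g :: "real \<Rightarrow> complex"
  assumes arcs: "arc h1" "arc h2" "arc e"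
    and s: "pathstart h1 = a" "pathstart h2 = a" "pathstart e = a"
    and f: "pathfinish h1 = b" "pathfinish h2 = b" "pathfinish e = b"
    and ab: "a \<noteq> b"
    and i12: "path_image h1 \<inter> path_image h2 = {a,b}"
    and i13: "path_image h1 \<inter> path_image e = {a,b}"
    and i23: "path_image h2 \<inter> path_image e = {a,b}"
    and g: "arc g" "pathstart g = u" "pathfinish g = v"
    and uv: "u \<in> oarc h1" "v \<in> oarc h2"
    and gi: "path_image g \<inter> (path_image h1 \<union> path_image h2 \<union> path_image e) \<subseteq> {u,v}"
    and side: "(oarc e \<subseteq> inside (path_image h1 \<union> path_image h2) \<and> oarc g \<subseteq> inside (path_image h1 \<union> path_image h2))
       \<or> (oarc e \<subseteq> outside (path_image h1 \<union> path_image h2) \<and> oarc g \<subseteq> outside (path_image h1 \<union> path_image h2))"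
  shows False
proof -
  let ?P1 = "path_image h1" let ?P2 = "path_image h2" let ?Pe = "path_image e"
  let ?F = "oarc g"
  have Fc: "connected ?F" and Fcl: "u \<in> closure ?F" "v \<in> closure ?F"
    using arc_oarc[OF g(1)] g pathstart_in_path_image pathfinish_in_path_image by blast+
  have Fd: "?F \<inter> (?P1 \<union> ?P2 \<union> ?Pe) = {}" using gi g by (auto simp: oarc_def)
  have vn: "v \<notin> ?Pe" "v \<notin> ?P1" "v \<in> ?P2" using uv i12 i23 s f by (auto simp: oarc_def)
  have un: "u \<notin> ?Pe" "u \<notin> ?P2" "u \<in> ?P1" using uv i12 i13 s f by (auto simp: oarc_def)
  note J12 = jordan_facts[OF arcs(1,2) s(1,2) f(1,2) i12]
  have i1e: "path_image e \<inter> path_image h1 = {a,b}" "path_image e \<inter> path_image h2 = {a,b}"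
    using i13 i23 by blast+
  note Je1 = jordan_facts[OF arcs(3,1) s(3,1) f(3,1) i1e(1)]
  note Je2 = jordan_facts[OF arcs(3,2) s(3,2) f(3,2) i1e(2)]
  from side show False
  proof
    assume A: "oarc e \<subseteq> inside (?P1 \<union> ?P2) \<and> ?F \<subseteq> inside (?P1 \<union> ?P2)"
    have ne: "?Pe \<inter> inside (?P1 \<union> ?P2) \<noteq> {}"
      using arc_oarc(3)[OF arcs(3)] A by (auto simp: oarc_def)
    obtain d: "inside (?P1 \<union> ?Pe) \<inter> inside (?P2 \<union> ?Pe) = {}"
      and un2: "inside (?P1 \<union> ?Pe) \<union> inside (?P2 \<union> ?Pe) \<union> (?Pe - {a,b}) = inside (?P1 \<union> ?P2)"
      by (rule split_inside_simple_closed_curve[of h1 a b h2 e])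
         (use arcs s f ab i12 i13 i23 ne arc_imp_simple_path in auto)
    have "?F \<subseteq> inside (?Pe \<union> ?P1) \<or> ?F \<subseteq> inside (?Pe \<union> ?P2)"
      by (rule conn_two[OF Fc _ Je1(1) Je2(1)]) (use A un2 d Fd in \<open>auto simp: Un_commute\<close>)
    then show False
    proof
      assume "?F \<subseteq> inside (?Pe \<union> ?P1)"
      then have "v \<in> closure (inside (?Pe \<union> ?P1))" using Fcl closure_mono by blast
      then have "v \<in> ?Pe \<union> ?P1 \<union> inside (?Pe \<union> ?P1)" using Je1(6) by blast
      moreover have "inside (?Pe \<union> ?P1) \<subseteq> inside (?P1 \<union> ?P2)" using un2 by (auto simp: Un_commute)
      moreover have "v \<notin> inside (?P1 \<union> ?P2)" using vn inside_no_overlap by blast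
      ultimately show False using vn by blast
    next
      assume "?F \<subseteq> inside (?Pe \<union> ?P2)"
      then have "u \<in> closure (inside (?Pe \<union> ?P2))" using Fcl closure_mono by blast
      then have "u \<in> ?Pe \<union> ?P2 \<union> inside (?Pe \<union> ?P2)" using Je2(6) by blast
      moreover have "inside (?Pe \<union> ?P2) \<subseteq> inside (?P1 \<union> ?P2)" using un2 by (auto simp: Un_commute)
      moreover have "u \<notin> inside (?P1 \<union> ?P2)" using un inside_no_overlap by blast
      ultimately show False using un by blast
    qed
  next
    assume B: "oarc e \<subseteq> outside (?P1 \<union> ?P2) \<and> ?F \<subseteq> outside (?P1 \<union> ?P2)"
    have "oarc e \<subseteq> inside (?P1 \<union> ?P2) \<or> oarc h2 \<subseteq> inside (?P1 \<union> ?Pe) \<or> oarc h1 \<subseteq> inside (?P2 \<union> ?Pe)"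
      by (rule theta3[OF arcs s f i12 i13 i23])
    then show False
    proof (elim disjE)
      assume "oarc e \<subseteq> inside (?P1 \<union> ?P2)"
      then show False using B arc_oarc(3)[OF arcs(3)] inside_Int_outside by blast
    next
      assume h2i: "oarc h2 \<subseteq> inside (?P1 \<union> ?Pe)"
      show False
        by (rule outside_sub[OF arcs(2,1,3) s(2,1,3) f(2,1,3) ab _ i23 i13 h2i Fc Fcl(2) Fcl(1) uv(2) uv(1)])
           (use i12 Fd B in \<open>auto simp: Un_commute\<close>)
    next
      assume h1i: "oarc h1 \<subseteq> inside (?P2 \<union> ?Pe)"
      show False
        by (rule outside_sub[OF arcs s f ab i12 i13 i23 h1i Fc Fcl uv Fd]) (use B in auto)
    qed
  qed
qed

lemma K33_aux:
  fixes x y :: "nat \<Rightarrow> complex" and g :: "nat \<Rightarrow> nat \<Rightarrow> real \<Rightarrow> complex"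
  assumes A1: "\<And>i j. i < 3 \<Longrightarrow> j < 3 \<Longrightarrow> arc (g i j) \<and> pathstart (g i j) = x i \<and> pathfinish (g i j) = y j"
    and A2: "\<And>i j k l. i < 3 \<Longrightarrow> j < 3 \<Longrightarrow> k < 3 \<Longrightarrow> l < 3 \<Longrightarrow> (i,j) \<noteq> (k,l) \<Longrightarrow>
       path_image (g i j) \<inter> path_image (g k l) \<subseteq> (if i = k then {x i} else {}) \<union> (if j = l then {y j} else {})"
    and A3: "\<And>i k. i < 3 \<Longrightarrow> k < 3 \<Longrightarrow> i \<noteq> k \<Longrightarrow> x i \<noteq> x k"
      "\<And>j l. j < 3 \<Longrightarrow> l < 3 \<Longrightarrow> j \<noteq> l \<Longrightarrow> y j \<noteq> y l"
      "\<And>i j. i < 3 \<Longrightarrow> j < 3 \<Longrightarrow> x i \<noteq> y j"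
    and I: "i0 < 3" "i1 < 3" "i2 < 3" and J: "j0 < 3" "j1 < 3" "j2 < 3"
    and D: "i0 \<noteq> i1" "i0 \<noteq> i2" "i1 \<noteq> i2" "j0 \<noteq> j1" "j0 \<noteq> j2" "j1 \<noteq> j2"
    and S: "S = path_image (g i0 j0) \<union> path_image (g i1 j0) \<union> path_image (g i1 j1) \<union>
                path_image (g i2 j1) \<union> path_image (g i2 j2) \<union> path_image (g i0 j2)"
    and side: "(oarc (g i0 j1) \<subseteq> inside S \<and> oarc (g i1 j2) \<subseteq> inside S) \<or>
               (oarc (g i0 j1) \<subseteq> outside S \<and> oarc (g i1 j2) \<subseteq> outside S)"
  shows False
proof -
  have G00: "arc (g i0 j0)" "pathstart (g i0 j0) = x i0" "pathfinish (g i0 j0) = y j0" using A1 I J by auto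
  have G10: "arc (g i1 j0)" "pathstart (g i1 j0) = x i1" "pathfinish (g i1 j0) = y j0" using A1 I J by auto
  have G11: "arc (g i1 j1)" "pathstart (g i1 j1) = x i1" "pathfinish (g i1 j1) = y j1" using A1 I J by auto
  have G02: "arc (g i0 j2)" "pathstart (g i0 j2) = x i0" "pathfinish (g i0 j2) = y j2" using A1 I J by auto
  have G22: "arc (g i2 j2)" "pathstart (g i2 j2) = x i2" "pathfinish (g i2 j2) = y j2" using A1 I J by auto
  have G21: "arc (g i2 j1)" "pathstart (g i2 j1) = x i2" "pathfinish (g i2 j1) = y j1" using A1 I J by auto
  have G01: "arc (g i0 j1)" "pathstart (g i0 j1) = x i0" "pathfinish (g i0 j1) = y j1" using A1 I J by auto
  have G12: "arc (g i1 j2)" "pathstart (g i1 j2) = x i1" "pathfinish (g i1 j2) = y j2" using A1 I J by auto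
  have X: "x i0 \<noteq> x i1" "x i0 \<noteq> x i2" "x i1 \<noteq> x i2" using A3 I D by auto
  have Y: "y j0 \<noteq> y j1" "y j0 \<noteq> y j2" "y j1 \<noteq> y j2" using A3 J D by auto
  have XY: "x a \<noteq> y b" if "a < 3" "b < 3" for a b using A3 that by auto
  have XY': "x i0 \<noteq> y j0" "x i0 \<noteq> y j1" "x i0 \<noteq> y j2" "x i1 \<noteq> y j0" "x i1 \<noteq> y j1" "x i1 \<noteq> y j2"
     "x i2 \<noteq> y j0" "x i2 \<noteq> y j1" "x i2 \<noteq> y j2" using XY I J by auto
  have E0001: "path_image (g i0 j0) \<inter> path_image (g i0 j1) \<subseteq> {x i0}"
    using A2[OF I(1) J(1) I(1) J(2)] D by auto
  have E0002: "path_image (g i0 j0) \<inter> path_image (g i0 j2) \<subseteq> {x i0}"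
    using A2[OF I(1) J(1) I(1) J(3)] D by auto
  have E0010: "path_image (g i0 j0) \<inter> path_image (g i1 j0) \<subseteq> {y j0}"
    using A2[OF I(1) J(1) I(2) J(1)] D by auto
  have E0011: "path_image (g i0 j0) \<inter> path_image (g i1 j1) \<subseteq> {}"
    using A2[OF I(1) J(1) I(2) J(2)] D by auto
  have E0012: "path_image (g i0 j0) \<inter> path_image (g i1 j2) \<subseteq> {}"
    using A2[OF I(1) J(1) I(2) J(3)] D by auto
  have E0020: "path_image (g i0 j0) \<inter> path_image (g i2 j0) \<subseteq> {y j0}"
    using A2[OF I(1) J(1) I(3) J(1)] D by auto
  have E0021: "path_image (g i0 j0) \<inter> path_image (g i2 j1) \<subseteq> {}"
    using A2[OF I(1) J(1) I(3) J(2)] D by auto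
  have E0022: "path_image (g i0 j0) \<inter> path_image (g i2 j2) \<subseteq> {}"
    using A2[OF I(1) J(1) I(3) J(3)] D by auto
  have E0102: "path_image (g i0 j1) \<inter> path_image (g i0 j2) \<subseteq> {x i0}"
    using A2[OF I(1) J(2) I(1) J(3)] D by auto
  have E0110: "path_image (g i0 j1) \<inter> path_image (g i1 j0) \<subseteq> {}"
    using A2[OF I(1) J(2) I(2) J(1)] D by auto
  have E0111: "path_image (g i0 j1) \<inter> path_image (g i1 j1) \<subseteq> {y j1}"
    using A2[OF I(1) J(2) I(2) J(2)] D by auto
  have E0112: "path_image (g i0 j1) \<inter> path_image (g i1 j2) \<subseteq> {}"
    using A2[OF I(1) J(2) I(2) J(3)] D by auto
  have E0120: "path_image (g i0 j1) \<inter> path_image (g i2 j0) \<subseteq> {}"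
    using A2[OF I(1) J(2) I(3) J(1)] D by auto
  have E0121: "path_image (g i0 j1) \<inter> path_image (g i2 j1) \<subseteq> {y j1}"
    using A2[OF I(1) J(2) I(3) J(2)] D by auto
  have E0122: "path_image (g i0 j1) \<inter> path_image (g i2 j2) \<subseteq> {}"
    using A2[OF I(1) J(2) I(3) J(3)] D by auto
  have E0210: "path_image (g i0 j2) \<inter> path_image (g i1 j0) \<subseteq> {}"
    using A2[OF I(1) J(3) I(2) J(1)] D by auto
  have E0211: "path_image (g i0 j2) \<inter> path_image (g i1 j1) \<subseteq> {}"
    using A2[OF I(1) J(3) I(2) J(2)] D by auto
  have E0212: "path_image (g i0 j2) \<inter> path_image (g i1 j2) \<subseteq> {y j2}"
    using A2[OF I(1) J(3) I(2) J(3)] D by auto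
  have E0220: "path_image (g i0 j2) \<inter> path_image (g i2 j0) \<subseteq> {}"
    using A2[OF I(1) J(3) I(3) J(1)] D by auto
  have E0221: "path_image (g i0 j2) \<inter> path_image (g i2 j1) \<subseteq> {}"
    using A2[OF I(1) J(3) I(3) J(2)] D by auto
  have E0222: "path_image (g i0 j2) \<inter> path_image (g i2 j2) \<subseteq> {y j2}"
    using A2[OF I(1) J(3) I(3) J(3)] D by auto
  have E1011: "path_image (g i1 j0) \<inter> path_image (g i1 j1) \<subseteq> {x i1}"
    using A2[OF I(2) J(1) I(2) J(2)] D by auto
  have E1012: "path_image (g i1 j0) \<inter> path_image (g i1 j2) \<subseteq> {x i1}"
    using A2[OF I(2) J(1) I(2) J(3)] D by auto
  have E1020: "path_image (g i1 j0) \<inter> path_image (g i2 j0) \<subseteq> {y j0}"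
    using A2[OF I(2) J(1) I(3) J(1)] D by auto
  have E1021: "path_image (g i1 j0) \<inter> path_image (g i2 j1) \<subseteq> {}"
    using A2[OF I(2) J(1) I(3) J(2)] D by auto
  have E1022: "path_image (g i1 j0) \<inter> path_image (g i2 j2) \<subseteq> {}"
    using A2[OF I(2) J(1) I(3) J(3)] D by auto
  have E1112: "path_image (g i1 j1) \<inter> path_image (g i1 j2) \<subseteq> {x i1}"
    using A2[OF I(2) J(2) I(2) J(3)] D by auto
  have E1120: "path_image (g i1 j1) \<inter> path_image (g i2 j0) \<subseteq> {}"
    using A2[OF I(2) J(2) I(3) J(1)] D by auto
  have E1121: "path_image (g i1 j1) \<inter> path_image (g i2 j1) \<subseteq> {y j1}"
    using A2[OF I(2) J(2) I(3) J(2)] D by auto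
  have E1122: "path_image (g i1 j1) \<inter> path_image (g i2 j2) \<subseteq> {}"
    using A2[OF I(2) J(2) I(3) J(3)] D by auto
  have E1220: "path_image (g i1 j2) \<inter> path_image (g i2 j0) \<subseteq> {}"
    using A2[OF I(2) J(3) I(3) J(1)] D by auto
  have E1221: "path_image (g i1 j2) \<inter> path_image (g i2 j1) \<subseteq> {}"
    using A2[OF I(2) J(3) I(3) J(2)] D by auto
  have E1222: "path_image (g i1 j2) \<inter> path_image (g i2 j2) \<subseteq> {y j2}"
    using A2[OF I(2) J(3) I(3) J(3)] D by auto
  have E2021: "path_image (g i2 j0) \<inter> path_image (g i2 j1) \<subseteq> {x i2}"
    using A2[OF I(3) J(1) I(3) J(2)] D by auto
  have E2022: "path_image (g i2 j0) \<inter> path_image (g i2 j2) \<subseteq> {x i2}"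
    using A2[OF I(3) J(1) I(3) J(3)] D by auto
  have E2122: "path_image (g i2 j1) \<inter> path_image (g i2 j2) \<subseteq> {x i2}"
    using A2[OF I(3) J(2) I(3) J(3)] D by auto
  note E = E0001 E0002 E0010 E0011 E0012 E0020 E0021 E0022 E0102 E0110 E0111 E0112 E0120 E0121 E0122 E0210 E0211 E0212 E0220 E0221 E0222 E1011 E1012 E1020 E1021 E1022 E1112 E1120 E1121 E1122 E1220 E1221 E1222 E2021 E2022 E2122
  define h1 where "h1 = g i0 j0 +++ (reversepath (g i1 j0) +++ g i1 j1)"
  define h2 where "h2 = g i0 j2 +++ (reversepath (g i2 j2) +++ g i2 j1)"
  have a1: "arc (reversepath (g i1 j0) +++ g i1 j1)"
    by (rule arc_join) (use G10 G11 E in \<open>auto simp: arc_reversepath\<close>)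
  have p1: "path_image h1 = path_image (g i0 j0) \<union> path_image (g i1 j0) \<union> path_image (g i1 j1)"
    using G00 G10 G11 by (auto simp: h1_def path_image_join)
  have h1: "arc h1" "pathstart h1 = x i0" "pathfinish h1 = y j1"
    unfolding h1_def by (rule arc_join) (use G00 G10 G11 E a1 in \<open>auto simp: path_image_join\<close>)
  have a2: "arc (reversepath (g i2 j2) +++ g i2 j1)"
    by (rule arc_join) (use G22 G21 E in \<open>auto simp: arc_reversepath\<close>)
  have p2: "path_image h2 = path_image (g i0 j2) \<union> path_image (g i2 j2) \<union> path_image (g i2 j1)"
    using G02 G22 G21 by (auto simp: h2_def path_image_join)
  have h2: "arc h2" "pathstart h2 = x i0" "pathfinish h2 = y j1"
    unfolding h2_def by (rule arc_join) (use G02 G22 G21 E a2 in \<open>auto simp: path_image_join\<close>)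
  have SS: "S = path_image h1 \<union> path_image h2" using S p1 p2 by auto
  have st: "x i0 \<in> path_image (g i0 j0)" "x i0 \<in> path_image (g i0 j2)" "x i0 \<in> path_image (g i0 j1)"
    "y j1 \<in> path_image (g i1 j1)" "y j1 \<in> path_image (g i2 j1)" "y j1 \<in> path_image (g i0 j1)"
    "x i1 \<in> path_image (g i1 j0)" "y j2 \<in> path_image (g i2 j2)"
    "x i1 \<in> path_image (g i1 j2)" "y j2 \<in> path_image (g i1 j2)"
    using G00 G02 G01 G11 G21 G10 G22 G12 pathstart_in_path_image pathfinish_in_path_image by metis+
  show False
  proof (rule chords[OF h1(1) h2(1) G01(1) h1(2) h2(2) G01(2) h1(3) h2(3) G01(3) XY'(2) _ _ _ G12])
    show "path_image h1 \<inter> path_image h2 = {x i0, y j1}"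
      unfolding p1 p2 using E st by auto
    show "path_image h1 \<inter> path_image (g i0 j1) = {x i0, y j1}"
      unfolding p1 using E st by auto
    show "path_image h2 \<inter> path_image (g i0 j1) = {x i0, y j1}"
      unfolding p2 using E st by auto
    show "x i1 \<in> oarc h1" unfolding oarc_def p1 using h1 st X XY' by auto
    show "y j2 \<in> oarc h2" unfolding oarc_def p2 using h2 st Y XY' by auto
    show "path_image (g i1 j2) \<inter> (path_image h1 \<union> path_image h2 \<union> path_image (g i0 j1)) \<subseteq> {x i1, y j2}"
      unfolding p1 p2 using E by auto
    show "oarc (g i0 j1) \<subseteq> inside (path_image h1 \<union> path_image h2) \<and> oarc (g i1 j2) \<subseteq> inside (path_image h1 \<union> path_image h2) \<or>
      oarc (g i0 j1) \<subseteq> outside (path_image h1 \<union> path_image h2) \<and> oarc (g i1 j2) \<subseteq> outside (path_image h1 \<union> path_image h2)"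
      using side SS by simp
  qed
qed

lemma K33:
  fixes x y :: "nat \<Rightarrow> complex" and g :: "nat \<Rightarrow> nat \<Rightarrow> real \<Rightarrow> complex"
  assumes A1: "\<And>i j. i < 3 \<Longrightarrow> j < 3 \<Longrightarrow> arc (g i j) \<and> pathstart (g i j) = x i \<and> pathfinish (g i j) = y j"
    and A2: "\<And>i j k l. i < 3 \<Longrightarrow> j < 3 \<Longrightarrow> k < 3 \<Longrightarrow> l < 3 \<Longrightarrow> (i,j) \<noteq> (k,l) \<Longrightarrow>
       path_image (g i j) \<inter> path_image (g k l) \<subseteq> (if i = k then {x i} else {}) \<union> (if j = l then {y j} else {})"
    and A3: "\<And>i k. i < 3 \<Longrightarrow> k < 3 \<Longrightarrow> i \<noteq> k \<Longrightarrow> x i \<noteq> x k"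
      "\<And>j l. j < 3 \<Longrightarrow> l < 3 \<Longrightarrow> j \<noteq> l \<Longrightarrow> y j \<noteq> y l"
      "\<And>i j. i < 3 \<Longrightarrow> j < 3 \<Longrightarrow> x i \<noteq> y j"
  shows False
proof -
  define S where "S = path_image (g 0 0) \<union> path_image (g 1 0) \<union> path_image (g 1 1) \<union>
                path_image (g 2 1) \<union> path_image (g 2 2) \<union> path_image (g 0 2)"
  have dis: "oarc (g i j) \<inter> path_image (g k l) = {}"
    if "i < 3" "j < 3" "k < 3" "l < 3" "(i,j) \<noteq> (k,l)" for i j k l
    using A2[OF that] A1[OF that(1,2)] by (auto simp: oarc_def split: if_splits)
  have clS: "closed S" unfolding S_def
    using A1 by (intro closed_Un closed_path_image arc_imp_path) auto
  have s01: "oarc (g 0 1) \<subseteq> inside S \<or> oarc (g 0 1) \<subseteq> outside S"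
  proof (rule conn_side[OF _ _ clS])
    show "connected (oarc (g 0 1))" using A1 arc_oarc(1) by auto
    show "oarc (g 0 1) \<inter> S = {}" unfolding S_def using dis[of 0 1 0 0] dis[of 0 1 1 0] dis[of 0 1 1 1] dis[of 0 1 2 1] dis[of 0 1 2 2] dis[of 0 1 0 2] by auto
  qed
  have s12: "oarc (g 1 2) \<subseteq> inside S \<or> oarc (g 1 2) \<subseteq> outside S"
  proof (rule conn_side[OF _ _ clS])
    show "connected (oarc (g 1 2))" using A1 arc_oarc(1) by auto
    show "oarc (g 1 2) \<inter> S = {}" unfolding S_def using dis[of 1 2 0 0] dis[of 1 2 1 0] dis[of 1 2 1 1] dis[of 1 2 2 1] dis[of 1 2 2 2] dis[of 1 2 0 2] by auto
  qed
  have s20: "oarc (g 2 0) \<subseteq> inside S \<or> oarc (g 2 0) \<subseteq> outside S"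
  proof (rule conn_side[OF _ _ clS])
    show "connected (oarc (g 2 0))" using A1 arc_oarc(1) by auto
    show "oarc (g 2 0) \<inter> S = {}" unfolding S_def using dis[of 2 0 0 0] dis[of 2 0 1 0] dis[of 2 0 1 1] dis[of 2 0 2 1] dis[of 2 0 2 2] dis[of 2 0 0 2] by auto
  qed
  have c1: False if "(oarc (g 0 1) \<subseteq> inside S \<and> oarc (g 1 2) \<subseteq> inside S) \<or>
               (oarc (g 0 1) \<subseteq> outside S \<and> oarc (g 1 2) \<subseteq> outside S)"
    by (rule K33_aux[OF A1 A2 A3, of 0 1 2 0 1 2 S]) (use that in \<open>auto simp: S_def\<close>)
  have c2: False if "(oarc (g 1 2) \<subseteq> inside S \<and> oarc (g 2 0) \<subseteq> inside S) \<or>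
               (oarc (g 1 2) \<subseteq> outside S \<and> oarc (g 2 0) \<subseteq> outside S)"
    by (rule K33_aux[OF A1 A2 A3, of 1 2 0 1 2 0 S]) (use that in \<open>auto simp: S_def\<close>)
  have c3: False if "(oarc (g 2 0) \<subseteq> inside S \<and> oarc (g 0 1) \<subseteq> inside S) \<or>
               (oarc (g 2 0) \<subseteq> outside S \<and> oarc (g 0 1) \<subseteq> outside S)"
    by (rule K33_aux[OF A1 A2 A3, of 2 0 1 2 0 1 S]) (use that in \<open>auto simp: S_def\<close>)
  show False using s01 s12 s20 c1 c2 c3 by blast
qed


definition cph :: "real^2 \<Rightarrow> complex" where "cph v = Complex (v$1) (v$2)"

lemma linear_cph: "linear cph"
  by (auto simp: linear_iff complex_eq_iff cph_def)

lemma inj_cph: "inj cph"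
  by (auto simp: inj_def complex_eq_iff vec_eq_iff forall_2 cph_def)

lemma seg_cph: "closed_segment (cph a) (cph b) = cph ` closed_segment a b"
  by (rule closed_segment_linear_image[OF linear_cph])

lemma planar_seg:
  assumes pl: "planar_straight_line W F p"
    and e: "{u,v} \<in> F" and f: "{u',v'} \<in> F" and ne: "{u,v} \<noteq> {u',v'}"
  shows "closed_segment (cph (p u)) (cph (p v)) \<inter> closed_segment (cph (p u')) (cph (p v'))
         \<subseteq> (cph \<circ> p) ` ({u,v} \<inter> {u',v'})"
proof -
  have "closed_segment (p u) (p v) \<inter> closed_segment (p u') (p v') \<subseteq> p ` ({u,v} \<inter> {u',v'})"
    using pl[unfolded planar_straight_line_def, THEN conjunct2, THEN conjunct2, rule_format, OF e f refl refl ne] .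
  then have "cph ` (closed_segment (p u) (p v) \<inter> closed_segment (p u') (p v')) \<subseteq> cph ` p ` ({u,v} \<inter> {u',v'})"
    by (rule image_mono)
  then show ?thesis
    by (simp add: seg_cph image_Int[OF inj_cph] image_comp)
qed

lemma planar_inj:
  assumes pl: "planar_straight_line W F p" and "u \<in> W" "v \<in> W" "u \<noteq> v"
  shows "cph (p u) \<noteq> cph (p v)"
proof -
  have "inj_on p W" using pl unfolding planar_straight_line_def by (rule conjunct1)
  then have "p u \<noteq> p v" using assms(2-4) by (meson inj_onD)
  then show ?thesis using inj_cph by (metis injD)
qed

lemma K33_draw:
  fixes p :: "'v \<Rightarrow> real^2" and X Y :: "nat \<Rightarrow> 'v"
  assumes pl: "planar_straight_line W F p"
    and DX: "\<And>i k. i < 3 \<Longrightarrow> k < 3 \<Longrightarrow> i \<noteq> k \<Longrightarrow> X i \<noteq> X k"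
    and DY: "\<And>j l. j < 3 \<Longrightarrow> l < 3 \<Longrightarrow> j \<noteq> l \<Longrightarrow> Y j \<noteq> Y l"
    and DXY: "\<And>i j. i < 3 \<Longrightarrow> j < 3 \<Longrightarrow> X i \<noteq> Y j"
    and WX: "\<And>i. i < 3 \<Longrightarrow> X i \<in> W" and WY: "\<And>j. j < 3 \<Longrightarrow> Y j \<in> W"
    and E: "\<And>i j. i < 3 \<Longrightarrow> j < 3 \<Longrightarrow> (i,j) \<noteq> (0,0) \<Longrightarrow> {X i, Y j} \<in> F"
    and E00: "{X 0, Y 0} \<in> F \<or> (\<exists>b\<in>W. (\<forall>i<3. b \<noteq> X i \<and> b \<noteq> Y i) \<and> {X 0, b} \<in> F \<and> {b, Y 0} \<in> F)"
  shows False
proof -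
  define q where "q = cph \<circ> p"
  define x where "x i = q (X i)" for i
  define y where "y j = q (Y j)" for j
  have qinj: "q u \<noteq> q v" if "u \<in> W" "v \<in> W" "u \<noteq> v" for u v
    using planar_inj[OF pl that] by (simp add: q_def)
  have seg: "closed_segment (q u) (q v) \<inter> closed_segment (q u') (q v') \<subseteq> q ` ({u,v} \<inter> {u',v'})"
    if "{u,v} \<in> F" "{u',v'} \<in> F" "{u,v} \<noteq> {u',v'}" for u v u' v'
    using planar_seg[OF pl that] by (simp add: q_def)
  have A3: "\<And>i k. i < 3 \<Longrightarrow> k < 3 \<Longrightarrow> i \<noteq> k \<Longrightarrow> x i \<noteq> x k"
      "\<And>j l. j < 3 \<Longrightarrow> l < 3 \<Longrightarrow> j \<noteq> l \<Longrightarrow> y j \<noteq> y l"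
      "\<And>i j. i < 3 \<Longrightarrow> j < 3 \<Longrightarrow> x i \<noteq> y j"
    unfolding x_def y_def using qinj DX DY DXY WX WY by auto
  have edge_int: "closed_segment (x i) (y j) \<inter> closed_segment (x k) (y l)
      \<subseteq> (if i = k then {x i} else {}) \<union> (if j = l then {y j} else {})"
    if ijkl: "i < 3" "j < 3" "k < 3" "l < 3" "(i,j) \<noteq> (k,l)" and EF: "{X i, Y j} \<in> F" "{X k, Y l} \<in> F"
    for i j k l
  proof -
    have d1: "X i \<noteq> Y l" "Y j \<noteq> X k" using DXY[of i l] DXY[of k j] ijkl by auto
    have d2: "X i = X k \<Longrightarrow> i = k" "Y j = Y l \<Longrightarrow> j = l" using DX[of i k] DY[of j l] ijkl by blast+
    have ne: "{X i, Y j} \<noteq> {X k, Y l}"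
    proof
      assume eq: "{X i, Y j} = {X k, Y l}"
      have "X i \<in> {X k, Y l}" "Y j \<in> {X k, Y l}" unfolding eq[symmetric] by simp_all
      then have "X i = X k" "Y j = Y l" using d1 by simp_all
      then show False using d2 ijkl(5) by simp
    qed
    have sub: "{X i, Y j} \<inter> {X k, Y l} \<subseteq> (if i = k then {X i} else {}) \<union> (if j = l then {Y j} else {})"
    proof
      fix z assume z: "z \<in> {X i, Y j} \<inter> {X k, Y l}"
      show "z \<in> (if i = k then {X i} else {}) \<union> (if j = l then {Y j} else {})"
      proof (cases "z = X i")
        case True
        then have "z = X k" using z d1 by auto
        then have "i = k" using True d2 by simp
        then show ?thesis using True by simp
      next
        case False
        then have "z = Y j" using z by simp
        then have "z = Y l" using z d1 by auto
        then have "j = l" using \<open>z = Y j\<close> d2 by simp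
        then show ?thesis using \<open>z = Y j\<close> by simp
      qed
    qed
    have "q ` ({X i, Y j} \<inter> {X k, Y l}) \<subseteq> q ` ((if i = k then {X i} else {}) \<union> (if j = l then {Y j} else {}))"
      by (rule image_mono[OF sub])
    also have "\<dots> = (if i = k then {x i} else {}) \<union> (if j = l then {y j} else {})"
      by (simp add: x_def y_def)
    finally show ?thesis using seg[OF EF ne] by (simp add: x_def y_def)
  qed
  from E00 show False
  proof
    assume E0: "{X 0, Y 0} \<in> F"
    have EF: "{X i, Y j} \<in> F" if "i < 3" "j < 3" for i j
      using E E0 that by (cases "(i,j) = (0,0)") auto
    show False
    proof (rule K33[of "\<lambda>i j. linepath (x i) (y j)" x y, OF _ _ A3])
      show "arc (linepath (x i) (y j)) \<and> pathstart (linepath (x i) (y j)) = x i \<and> pathfinish (linepath (x i) (y j)) = y j"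
        if "i < 3" "j < 3" for i j using A3(3)[OF that] by (simp add: arc_linepath)
      show "path_image (linepath (x i) (y j)) \<inter> path_image (linepath (x k) (y l))
        \<subseteq> (if i = k then {x i} else {}) \<union> (if j = l then {y j} else {})"
        if "i < 3" "j < 3" "k < 3" "l < 3" "(i,j) \<noteq> (k,l)" for i j k l
        using edge_int[OF that EF[OF that(1,2)] EF[OF that(3,4)]] by simp
    qed
  next
    assume "\<exists>b\<in>W. (\<forall>i<3. b \<noteq> X i \<and> b \<noteq> Y i) \<and> {X 0, b} \<in> F \<and> {b, Y 0} \<in> F"
    then obtain b where bW: "b \<in> W" and bn: "\<forall>i<3. b \<noteq> X i \<and> b \<noteq> Y i"
      and Eb: "{X 0, b} \<in> F" "{b, Y 0} \<in> F" by blast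
    define g where "g i j = (if i = 0 \<and> j = 0 then linepath (x 0) (q b) +++ linepath (q b) (y 0)
                               else linepath (x i) (y j))" for i j
    have xb: "x 0 \<noteq> q b" "q b \<noteq> y 0" unfolding x_def y_def using qinj bW bn WX WY by force+
    have X0Y0: "X 0 \<noteq> Y 0" using DXY by auto
    have bint1: "closed_segment (x 0) (q b) \<inter> closed_segment (x k) (y l) \<subseteq> (if k = 0 then {x 0} else {})"
      if "k < 3" "l < 3" "(k,l) \<noteq> (0,0)" for k l
    proof -
      have ne: "{X 0, b} \<noteq> {X k, Y l}" using bn that by (auto simp: doubleton_eq_iff)
      have "q ` ({X 0, b} \<inter> {X k, Y l}) \<subseteq> (if k = 0 then {x 0} else {})"
        using bn that DX[of 0 k] DXY[of 0 l] by (auto simp: x_def)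
      then show ?thesis using seg[OF Eb(1) E[OF that] ne] unfolding x_def y_def by blast
    qed
    have bint2: "closed_segment (q b) (y 0) \<inter> closed_segment (x k) (y l) \<subseteq> (if l = 0 then {y 0} else {})"
      if "k < 3" "l < 3" "(k,l) \<noteq> (0,0)" for k l
    proof -
      have ne: "{b, Y 0} \<noteq> {X k, Y l}" using bn that by (auto simp: doubleton_eq_iff)
      have "q ` ({b, Y 0} \<inter> {X k, Y l}) \<subseteq> (if l = 0 then {y 0} else {})"
        using bn that DY[of 0 l] DXY[of k 0] by (auto simp: y_def)
      then show ?thesis using seg[OF Eb(2) E[OF that] ne] unfolding x_def y_def by blast
    qed
    have bb: "closed_segment (x 0) (q b) \<inter> closed_segment (q b) (y 0) \<subseteq> {q b}"
    proof -
      have ne: "{X 0, b} \<noteq> {b, Y 0}" using X0Y0 bn by (auto simp: doubleton_eq_iff)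
      have "q ` ({X 0, b} \<inter> {b, Y 0}) \<subseteq> {q b}" using X0Y0 by auto
      then show ?thesis using seg[OF Eb ne] unfolding x_def y_def by blast
    qed
    have pg00: "path_image (g 0 0) = closed_segment (x 0) (q b) \<union> closed_segment (q b) (y 0)"
      by (simp add: g_def path_image_join)
    have pg: "path_image (g i j) = closed_segment (x i) (y j)" if "(i,j) \<noteq> (0,0)" for i j
      using that by (auto simp: g_def)
    show False
    proof (rule K33[of g x y, OF _ _ A3])
      show "arc (g i j) \<and> pathstart (g i j) = x i \<and> pathfinish (g i j) = y j"
        if "i < 3" "j < 3" for i j
      proof (cases "i = 0 \<and> j = 0")
        case True
        have "arc (linepath (x 0) (q b) +++ linepath (q b) (y 0))"
          by (rule arc_join) (use xb bb in \<open>auto simp: arc_linepath\<close>)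
        then show ?thesis using True by (simp add: g_def)
      next
        case False
        then show ?thesis using A3(3)[OF that] by (auto simp: g_def arc_linepath)
      qed
      show "path_image (g i j) \<inter> path_image (g k l)
        \<subseteq> (if i = k then {x i} else {}) \<union> (if j = l then {y j} else {})"
        if ijkl: "i < 3" "j < 3" "k < 3" "l < 3" "(i,j) \<noteq> (k,l)" for i j k l
      proof (cases "(i,j) = (0,0)")
        case True
        then have kl: "(k,l) \<noteq> (0,0)" using ijkl by auto
        show ?thesis using True pg00 pg[OF kl] bint1[OF ijkl(3,4) kl] bint2[OF ijkl(3,4) kl] by auto
      next
        case F1: False
        show ?thesis
        proof (cases "(k,l) = (0,0)")
          case True
          show ?thesis using True pg00 pg[OF F1] bint1[OF ijkl(1,2) F1] bint2[OF ijkl(1,2) F1] by auto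
        next
          case False
          show ?thesis using pg[OF F1] pg[OF False] edge_int[OF ijkl E[OF ijkl(1,2) F1] E[OF ijkl(3,4) False]]
            by simp
        qed
      qed
    qed
  qed
qed


lemma GE_qa: "i \<in> {1..4} \<Longrightarrow> j \<in> {1..2} \<Longrightarrow> k \<in> {1..4} \<Longrightarrow> {Qv i j, Av k} \<in> G_edges"
  unfolding G_edges_def by (intro UnI1 UnI2) (auto intro!: exI)
lemma GE_qb: "i \<in> {1..4} \<Longrightarrow> j \<in> {1..2} \<Longrightarrow> k \<in> {1..4} \<Longrightarrow> {Qv i j, Bv k} \<in> G_edges"
  unfolding G_edges_def by (intro UnI1 UnI2) (auto intro!: exI)
lemma GE_aa: "i \<in> {1..4} \<Longrightarrow> {Av i, Av (nxt i)} \<in> G_edges"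
  unfolding G_edges_def by (intro UnI1 UnI2) (auto intro!: exI)
lemma GE_rq: "i \<in> {1..4} \<Longrightarrow> j \<in> {1..2} \<Longrightarrow> {Rv i j, Qv i j} \<in> G_edges"
  unfolding G_edges_def by (intro UnI1 UnI2) (auto intro!: exI)
lemma GE_qc: "i \<in> {1..4} \<Longrightarrow> j \<in> {1..2} \<Longrightarrow> k \<in> {1..4} \<Longrightarrow> {Qv i j, Cv k} \<in> G_edges"
  unfolding G_edges_def by (intro UnI1 UnI2) (auto intro!: exI)


lemma lt3: "(n::nat) < 3 \<longleftrightarrow> n = 0 \<or> n = 1 \<or> n = 2" by auto

lemma nxt_simps: "nxt 1 = 2" "nxt 2 = 3" "nxt 3 = 4" "nxt 4 = 1" by (simp_all add: nxt_def)

lemma GV: "i \<in> {1..4} \<Longrightarrow> Av i \<in> G_verts" "i \<in> {1..4} \<Longrightarrow> Bv i \<in> G_verts"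
  "i \<in> {1..4} \<Longrightarrow> Cv i \<in> G_verts"
  "i \<in> {1..4} \<Longrightarrow> j \<in> {1..2} \<Longrightarrow> Qv i j \<in> G_verts"
  "i \<in> {1..4} \<Longrightarrow> j \<in> {1..2} \<Longrightarrow> Rv i j \<in> G_verts"
  unfolding G_verts_def by blast+

lemma frame_planar:
  assumes "planar_geometric_storyplan V E l I p" "\<tau> \<in> {1..l}"
  shows "planar_straight_line (frame_verts V I \<tau>) (frame_edges E I \<tau>) p"
  using assms unfolding planar_geometric_storyplan_def by blast

lemma in_fe: "e \<in> E \<Longrightarrow> e = {u,v} \<Longrightarrow> \<tau> \<in> I u \<Longrightarrow> \<tau> \<in> I v \<Longrightarrow> e \<in> frame_edges E I \<tau>"
  unfolding frame_edges_def by auto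

lemma in_fv: "v \<in> V \<Longrightarrow> \<tau> \<in> I v \<Longrightarrow> v \<in> frame_verts V I \<tau>"
  unfolding frame_verts_def by auto

lemma three_q:
  assumes sp: "planar_geometric_storyplan G_verts G_edges l I p" and tau: "\<tau> \<in> {1..l}"
    and q: "\<tau> \<in> I (Qv 1 1)" "\<tau> \<in> I (Qv 1 2)" "\<tau> \<in> I (Qv 2 1)"
    and a: "\<tau> \<in> I (Av a)" "\<tau> \<in> I (Av b)" "\<tau> \<in> I (Av c)"
    and abc: "a \<in> {1..4}" "b \<in> {1..4}" "c \<in> {1..4}" "a \<noteq> b" "a \<noteq> c" "b \<noteq> c"
  shows False
proof -
  define X where "X n = (if n = 0 then Qv 1 1 else if n = 1 then Qv 1 2 else Qv 2 1)" for n :: nat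
  define Y where "Y n = (if n = 0 then Av a else if n = 1 then Av b else Av c)" for n :: nat
  have vis: "\<tau> \<in> I (X n)" "\<tau> \<in> I (Y n)" for n using q a by (auto simp: X_def Y_def)
  have ed: "{X i, Y j} \<in> G_edges" if "i < 3" "j < 3" for i j
    using that abc by (auto simp: lt3 X_def Y_def intro!: GE_qa)
  have gv: "X i \<in> G_verts" "Y i \<in> G_verts" for i
    using abc by (auto simp: X_def Y_def intro!: GV)
  show False
  proof (rule K33_draw[OF frame_planar[OF sp tau], of X Y])
    show "\<And>i k. i < 3 \<Longrightarrow> k < 3 \<Longrightarrow> i \<noteq> k \<Longrightarrow> X i \<noteq> X k" by (auto simp: lt3 X_def)
    show "\<And>j l. j < 3 \<Longrightarrow> l < 3 \<Longrightarrow> j \<noteq> l \<Longrightarrow> Y j \<noteq> Y l" using abc by (auto simp: lt3 Y_def)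
    show "\<And>i j. i < 3 \<Longrightarrow> j < 3 \<Longrightarrow> X i \<noteq> Y j" by (auto simp: X_def Y_def)
    show "\<And>i. i < 3 \<Longrightarrow> X i \<in> frame_verts G_verts I \<tau>" using gv vis by (auto intro: in_fv)
    show "\<And>i. i < 3 \<Longrightarrow> Y i \<in> frame_verts G_verts I \<tau>" using gv vis by (auto intro: in_fv)
    show "\<And>i j. i < 3 \<Longrightarrow> j < 3 \<Longrightarrow> (i, j) \<noteq> (0, 0) \<Longrightarrow> {X i, Y j} \<in> frame_edges G_edges I \<tau>"
      using ed vis by (auto intro: in_fe)
    show "{X 0, Y 0} \<in> frame_edges G_edges I \<tau> \<or> (\<exists>b\<in>frame_verts G_verts I \<tau>. (\<forall>i<3. b \<noteq> X i \<and> b \<noteq> Y i) \<and>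
      {X 0, b} \<in> frame_edges G_edges I \<tau> \<and> {b, Y 0} \<in> frame_edges G_edges I \<tau>)"
      using ed[of 0 0] vis by (auto intro: in_fe)
  qed
qed

lemma two_q:
  assumes sp: "planar_geometric_storyplan G_verts G_edges l I p" and tau: "\<tau> \<in> {1..l}"
    and a: "\<tau> \<in> I (Av 1)" "\<tau> \<in> I (Av 2)" "\<tau> \<in> I (Av 3)" "\<tau> \<in> I (Av 4)" "\<tau> \<in> I (Bv 1)"
    and q: "\<tau> \<in> I (Qv i j)" "\<tau> \<in> I (Qv i' j')"
    and ij: "i \<in> {1..4}" "j \<in> {1..2}" "i' \<in> {1..4}" "j' \<in> {1..2}" "(i,j) \<noteq> (i',j')"
  shows False
proof -
  define X where "X n = (if n = 0 then Qv i j else if n = 1 then Av 1 else Av 3)" for n :: nat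
  define Y where "Y n = (if n = 0 then Qv i' j' else if n = 1 then Av 2 else Av 4)" for n :: nat
  have vis: "\<tau> \<in> I (X n)" "\<tau> \<in> I (Y n)" for n using q a by (auto simp: X_def Y_def)
  have e12: "{Av 1, Av 2} \<in> G_edges" using GE_aa[of 1] unfolding nxt_simps by simp
  have e32: "{Av 3, Av 2} \<in> G_edges" using GE_aa[of 2] unfolding nxt_simps by (simp add: insert_commute)
  have e34: "{Av 3, Av 4} \<in> G_edges" using GE_aa[of 3] unfolding nxt_simps by simp
  have e14: "{Av 1, Av 4} \<in> G_edges" using GE_aa[of 4] unfolding nxt_simps by (simp add: insert_commute)
  have eaq: "{Av k, Qv i' j'} \<in> G_edges" if "k \<in> {1..4}" for k
    using GE_qa[OF ij(3,4) that] by (simp add: insert_commute)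
  have ed: "{X n, Y m} \<in> G_edges" if "n < 3" "m < 3" "(n,m) \<noteq> (0,0)" for n m
    using that ij e12 e32 e34 e14 eaq by (auto simp: lt3 X_def Y_def intro!: GE_qa)
  have gv: "X n \<in> G_verts" "Y n \<in> G_verts" for n
    using ij by (auto simp: X_def Y_def intro!: GV)
  have eb1: "{Qv i j, Bv 1} \<in> G_edges" using GE_qb[OF ij(1,2)] by simp
  have eb2: "{Bv 1, Qv i' j'} \<in> G_edges" using GE_qb[OF ij(3,4)] by (simp add: insert_commute)
  show False
  proof (rule K33_draw[OF frame_planar[OF sp tau], of X Y])
    show "\<And>n k. n < 3 \<Longrightarrow> k < 3 \<Longrightarrow> n \<noteq> k \<Longrightarrow> X n \<noteq> X k" by (auto simp: lt3 X_def)
    show "\<And>n k. n < 3 \<Longrightarrow> k < 3 \<Longrightarrow> n \<noteq> k \<Longrightarrow> Y n \<noteq> Y k" by (auto simp: lt3 Y_def)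
    show "\<And>n m. n < 3 \<Longrightarrow> m < 3 \<Longrightarrow> X n \<noteq> Y m" using ij(5) by (auto simp: X_def Y_def)
    show "\<And>n. n < 3 \<Longrightarrow> X n \<in> frame_verts G_verts I \<tau>" using gv vis by (auto intro: in_fv)
    show "\<And>n. n < 3 \<Longrightarrow> Y n \<in> frame_verts G_verts I \<tau>" using gv vis by (auto intro: in_fv)
    show "\<And>n m. n < 3 \<Longrightarrow> m < 3 \<Longrightarrow> (n, m) \<noteq> (0, 0) \<Longrightarrow> {X n, Y m} \<in> frame_edges G_edges I \<tau>"
      using ed vis by (auto intro: in_fe)
    have "Bv 1 \<in> frame_verts G_verts I \<tau>" using a(5) GV(2)[of 1] by (auto intro: in_fv)
    moreover have "\<forall>n<3. Bv 1 \<noteq> X n \<and> Bv 1 \<noteq> Y n" by (auto simp: X_def Y_def)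
    moreover have "{X 0, Bv 1} \<in> frame_edges G_edges I \<tau>" "{Bv 1, Y 0} \<in> frame_edges G_edges I \<tau>"
      using in_fe[OF eb1 refl q(1) a(5)] in_fe[OF eb2 refl a(5) q(2)] by (simp_all add: X_def Y_def)
    ultimately show "{X 0, Y 0} \<in> frame_edges G_edges I \<tau> \<or> (\<exists>b\<in>frame_verts G_verts I \<tau>. (\<forall>n<3. b \<noteq> X n \<and> b \<noteq> Y n) \<and>
      {X 0, b} \<in> frame_edges G_edges I \<tau> \<and> {b, Y 0} \<in> frame_edges G_edges I \<tau>)"
      by blast
  qed
qed

theorem corollary4:
  fixes l :: nat and I :: "gv \<Rightarrow> nat set" and p :: "gv \<Rightarrow> real^2"
  assumes "planar_geometric_storyplan G_verts G_edges l I p"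
  shows "\<exists>T :: nat set. \<exists>ap :: nat \<Rightarrow> nat \<times> nat.
           T \<subseteq> {1..l} \<and> finite T \<and> card T \<ge> 6 \<and> inj_on ap T \<and>
           (\<forall>t\<in>T. ap t \<in> {1..4} \<times> {1..2} \<and>
              Qv (fst (ap t)) (snd (ap t)) \<in> frame_verts G_verts I t \<and>
              Rv (fst (ap t)) (snd (ap t)) \<in> frame_verts G_verts I t \<and>
              cycle_verts \<subseteq> frame_verts G_verts I t)"
proof -
  note sp = assms
  have SI: "storyplan_intervals G_verts G_edges l I" using sp by (simp add: planar_geometric_storyplan_def)
  have iv: "\<forall>v\<in>G_verts. I v \<noteq> {} \<and> I v \<subseteq> {1..l} \<and> (\<exists>s t. I v = {s..t})"
    using SI unfolding storyplan_intervals_def by (rule conjunct1)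
  have H: "\<forall>e\<in>G_edges. \<forall>u v. e = {u, v} \<longrightarrow> I u \<inter> I v \<noteq> {}"
    using SI unfolding storyplan_intervals_def by (rule conjunct2)
  have ie: "I u \<inter> I v \<noteq> {}" if "{u,v} \<in> G_edges" for u v
    using bspec[OF H that] by simp
  have "\<forall>v\<in>G_verts. \<exists>ab. I v = {fst ab..snd ab} \<and> fst ab \<le> snd ab"
  proof
    fix v assume v: "v \<in> G_verts"
    obtain a b where ab: "I v = {a..b}" using iv v by blast
    moreover have "I v \<noteq> {}" using iv v by blast
    ultimately show "\<exists>ab. I v = {fst ab..snd ab} \<and> fst ab \<le> snd ab"
      by (intro exI[of _ "(a,b)"]) auto
  qed
  then obtain f where f: "\<forall>v\<in>G_verts. I v = {fst (f v)..snd (f v)} \<and> fst (f v) \<le> snd (f v)"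
    by (rule bchoice[THEN exE]) blast
  define s where "s v = fst (f v)" for v
  define t where "t v = snd (f v)" for v
  have st: "I v = {s v..t v}" "s v \<le> t v" if "v \<in> G_verts" for v
    using f that by (auto simp: s_def t_def)
  have vis: "\<tau> \<in> I v \<longleftrightarrow> s v \<le> \<tau> \<and> \<tau> \<le> t v" if "v \<in> G_verts" for v \<tau>
    using st[OF that] by auto
  have bnd: "1 \<le> s v" "t v \<le> l" if "v \<in> G_verts" for v
  proof -
    have "s v \<in> I v" "t v \<in> I v" using st[OF that] by auto
    then show "1 \<le> s v" "t v \<le> l" using iv that by auto
  qed
  have adj: "s u \<le> t v \<and> s v \<le> t u" if uv: "{u,v} \<in> G_edges" "u \<in> G_verts" "v \<in> G_verts" for u v
  proof -
    obtain \<tau> where "\<tau> \<in> I u" "\<tau> \<in> I v" using ie[OF uv(1)] by blast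
    then show ?thesis using vis[OF uv(2)] vis[OF uv(3)] by auto
  qed
  define Cy where "Cy = cycle_verts"
  have Cy_eq: "Cy = Av ` {1..4} \<union> Bv ` {1..4} \<union> Cv ` {1..4}"
    unfolding Cy_def cycle_verts_def by auto
  have finCy: "finite Cy" and neCy: "Cy \<noteq> {}" using Cy_eq by auto
  have CyG: "v \<in> G_verts" if "v \<in> Cy" for v using that GV unfolding Cy_eq by auto
  have qadj: "{Qv i j, v} \<in> G_edges" if "i \<in> {1..4}" "j \<in> {1..2}" "v \<in> Cy" for i j v
    using that GE_qa GE_qb GE_qc unfolding Cy_eq by auto
  define L where "L = Max (s ` Cy)"
  define R where "R = Min (t ` Cy)"
  have sL: "s v \<le> L" if "v \<in> Cy" for v unfolding L_def using finCy that by simp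
  have tR: "R \<le> t v" if "v \<in> Cy" for v unfolding R_def using finCy that by simp
  have "Min (t ` Cy) \<in> t ` Cy" using finCy neCy by (intro Min_in) auto
  then obtain v0 where v0: "v0 \<in> Cy" "t v0 = R" unfolding R_def by auto
  have "Max (s ` Cy) \<in> s ` Cy" using finCy neCy by (intro Max_in) auto
  then obtain v1 where v1: "v1 \<in> Cy" "s v1 = L" unfolding L_def by auto
  have qR: "s (Qv i j) \<le> R" and qL: "L \<le> t (Qv i j)" if "i \<in> {1..4}" "j \<in> {1..2}" for i j
  proof -
    have "s (Qv i j) \<le> t v0" using adj[OF qadj[OF that v0(1)] GV(4)[OF that] CyG[OF v0(1)]] by simp
    then show "s (Qv i j) \<le> R" using v0 by simp
    have "s v1 \<le> t (Qv i j)" using adj[OF qadj[OF that v1(1)] GV(4)[OF that] CyG[OF v1(1)]] by simp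
    then show "L \<le> t (Qv i j)" using v1 by simp
  qed
  have AC: "Av k \<in> Cy" "Bv k \<in> Cy" if "k \<in> {1..4}" for k using that unfolding Cy_eq by auto
  define P8 where "P8 = ({1..4} \<times> {1..2} :: (nat \<times> nat) set)"
  define Q where "Q ij = Qv (fst ij) (snd ij)" for ij :: "nat \<times> nat"
  have QG: "Q ij \<in> G_verts" "Rv (fst ij) (snd ij) \<in> G_verts" if "ij \<in> P8" for ij
    using that GV by (auto simp: P8_def Q_def)
  show ?thesis
  proof (cases "L \<le> R")
    case True
    have win: "\<tau> \<in> I v" if "v \<in> Cy" "L \<le> \<tau>" "\<tau> \<le> R" for v \<tau>
      using vis[OF CyG[OF that(1)]] sL[OF that(1)] tR[OF that(1)] that by auto
    have winl: "\<tau> \<in> {1..l}" if "L \<le> \<tau>" "\<tau> \<le> R" for \<tau>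
    proof -
      have "Av 1 \<in> Cy" using AC by simp
      then show ?thesis using win[OF _ that] bnd[OF CyG] vis[OF CyG] by fastforce
    qed
    have uniq: "ij = ij'" if "ij \<in> P8" "ij' \<in> P8" "L \<le> \<tau>" "\<tau> \<le> R" "\<tau> \<in> I (Q ij)" "\<tau> \<in> I (Q ij')"
      for ij ij' \<tau>
    proof (rule ccontr)
      assume ne: "ij \<noteq> ij'"
      show False
      proof (rule two_q[OF sp winl[OF that(3,4)]])
        show "\<tau> \<in> I (Av 1)" "\<tau> \<in> I (Av 2)" "\<tau> \<in> I (Av 3)" "\<tau> \<in> I (Av 4)" "\<tau> \<in> I (Bv 1)"
          using win AC that(3,4) by auto
        show "\<tau> \<in> I (Qv (fst ij) (snd ij))" "\<tau> \<in> I (Qv (fst ij') (snd ij'))" using that(5,6) by (simp_all add: Q_def)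
        show "fst ij \<in> {1..4}" "snd ij \<in> {1..2}" "fst ij' \<in> {1..4}" "snd ij' \<in> {1..2}"
          using that(1,2) by (auto simp: P8_def)
        show "(fst ij, snd ij) \<noteq> (fst ij', snd ij')" using ne by (simp add: prod_eq_iff)
      qed
    qed
    define Good where "Good = {ij \<in> P8. L \<le> s (Q ij) \<and> t (Q ij) \<le> R}"
    define BL where "BL = {ij \<in> P8. L \<in> I (Q ij)}"
    define BR where "BR = {ij \<in> P8. R \<in> I (Q ij)}"
    have finP8: "finite P8" by (simp add: P8_def)
    have cardP8: "card P8 = 8" by (simp add: P8_def)
    have cover: "P8 \<subseteq> Good \<union> BL \<union> BR"
    proof
      fix ij assume ij: "ij \<in> P8"
      have r: "fst ij \<in> {1..4}" "snd ij \<in> {1..2}" using ij by (auto simp: P8_def)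
      have a1: "s (Q ij) \<le> R" "L \<le> t (Q ij)" using qR[OF r] qL[OF r] by (simp_all add: Q_def)
      have vq: "\<tau> \<in> I (Q ij) \<longleftrightarrow> s (Q ij) \<le> \<tau> \<and> \<tau> \<le> t (Q ij)" for \<tau>
        using vis[OF QG(1)[OF ij]] .
      show "ij \<in> Good \<union> BL \<union> BR"
      proof (cases "L \<le> s (Q ij) \<and> t (Q ij) \<le> R")
        case True
        then have "ij \<in> Good" using ij by (simp add: Good_def)
        then show ?thesis by blast
      next
        case False
        show ?thesis
        proof (cases "s (Q ij) < L")
          case True
          then have "L \<in> I (Q ij)" using vq a1 by simp
          then have "ij \<in> BL" using ij by (simp add: BL_def)
          then show ?thesis by blast
        next
          case False
          then have "R < t (Q ij)" using \<open>\<not> (L \<le> s (Q ij) \<and> t (Q ij) \<le> R)\<close> by linarith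
          then have "R \<in> I (Q ij)" using vq a1 by simp
          then have "ij \<in> BR" using ij by (simp add: BR_def)
          then show ?thesis by blast
        qed
      qed
    qed
    have cBL: "card BL \<le> 1"
    proof -
      have "finite BL" using finP8 by (simp add: BL_def)
      moreover have "\<forall>a\<in>BL. \<forall>b\<in>BL. a = b" using uniq[of _ _ L] True by (auto simp: BL_def)
      ultimately show ?thesis using card_le_Suc0_iff_eq by auto
    qed
    have cBR: "card BR \<le> 1"
    proof -
      have "finite BR" using finP8 by (simp add: BR_def)
      moreover have "\<forall>a\<in>BR. \<forall>b\<in>BR. a = b" using uniq[of _ _ R] True by (auto simp: BR_def)
      ultimately show ?thesis using card_le_Suc0_iff_eq by auto
    qed
    have finG: "finite Good" using finP8 by (simp add: Good_def)
    have "8 \<le> card (Good \<union> BL \<union> BR)"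
      using card_mono[OF _ cover] cardP8 finG finP8 by (simp add: BL_def BR_def)
    also have "\<dots> \<le> card Good + card BL + card BR"
      by (meson card_Un_le add_le_mono order_trans le_refl)
    finally have cG: "6 \<le> card Good" using cBL cBR by linarith
    have ex: "\<exists>\<tau>. \<tau> \<in> I (Q ij) \<and> \<tau> \<in> I (Rv (fst ij) (snd ij))" if "ij \<in> P8" for ij
    proof -
      have "fst ij \<in> {1..4}" "snd ij \<in> {1..2}" using that by (auto simp: P8_def)
      from ie[OF GE_rq[OF this]] show ?thesis by (auto simp: Q_def)
    qed
    define tf where "tf ij = (SOME \<tau>. \<tau> \<in> I (Q ij) \<and> \<tau> \<in> I (Rv (fst ij) (snd ij)))" for ij
    have tf: "tf ij \<in> I (Q ij)" "tf ij \<in> I (Rv (fst ij) (snd ij))" if "ij \<in> P8" for ij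
      using someI_ex[OF ex[OF that]] by (simp_all add: tf_def)
    have twin: "L \<le> tf ij" "tf ij \<le> R" if "ij \<in> Good" for ij
    proof -
      have ij: "ij \<in> P8" using that by (simp add: Good_def)
      show "L \<le> tf ij" "tf ij \<le> R" using tf(1)[OF ij] vis[OF QG(1)[OF ij]] that by (auto simp: Good_def)
    qed
    have inj: "inj_on tf Good"
    proof (rule inj_onI)
      fix a b assume ab: "a \<in> Good" "b \<in> Good" "tf a = tf b"
      have P: "a \<in> P8" "b \<in> P8" using ab by (auto simp: Good_def)
      show "a = b" using uniq[OF P twin(1,2)[OF ab(1)] tf(1)[OF P(1)]] tf(1)[OF P(2)] ab(3) by simp
    qed
    define T where "T = tf ` Good"
    define ap where "ap = the_inv_into Good tf"
    show ?thesis
    proof (intro exI[of _ T] exI[of _ ap] conjI ballI)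
      show "T \<subseteq> {1..l}" unfolding T_def using winl twin by auto
      show "finite T" unfolding T_def using finG by simp
      show "6 \<le> card T" unfolding T_def using card_image[OF inj] cG by simp
      show "inj_on ap T" unfolding ap_def T_def by (rule inj_on_the_inv_into[OF inj])
      fix \<tau> assume "\<tau> \<in> T"
      then obtain ij where ij: "ij \<in> Good" "\<tau> = tf ij" unfolding T_def by blast
      have apij: "ap \<tau> = ij" unfolding ap_def ij(2) by (rule the_inv_into_f_f[OF inj ij(1)])
      have P: "ij \<in> P8" using ij by (simp add: Good_def)
      show "ap \<tau> \<in> {1..4} \<times> {1..2}" using P apij by (simp add: P8_def)
      show "Qv (fst (ap \<tau>)) (snd (ap \<tau>)) \<in> frame_verts G_verts I \<tau>"
        using apij ij tf(1)[OF P] QG(1)[OF P] by (auto simp: Q_def intro: in_fv)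
      show "Rv (fst (ap \<tau>)) (snd (ap \<tau>)) \<in> frame_verts G_verts I \<tau>"
        using apij ij tf(2)[OF P] QG(2)[OF P] by (auto intro: in_fv)
      show "cycle_verts \<subseteq> frame_verts G_verts I \<tau>"
        using win twin[OF ij(1)] ij(2) CyG by (auto simp: Cy_def intro: in_fv)
    qed
  next
    case False
    define Q1 where "Q1 = Qv 1 1"
    define Q2 where "Q2 = Qv 1 2"
    define Q3 where "Q3 = Qv 2 1"
    have Qs: "s Q1 \<le> R" "s Q2 \<le> R" "s Q3 \<le> R" "L \<le> t Q1" "L \<le> t Q2" "L \<le> t Q3"
      using qR qL by (auto simp: Q1_def Q2_def Q3_def)
    have QsG: "Q1 \<in> G_verts" "Q2 \<in> G_verts" "Q3 \<in> G_verts" using GV by (auto simp: Q1_def Q2_def Q3_def)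
    define T' where "T' = min (t Q1) (min (t Q2) (t Q3))"
    have aQ: "s (Av k) \<le> T'" "s Q1 \<le> t (Av k)" "s Q2 \<le> t (Av k)" "s Q3 \<le> t (Av k)"
      if "k \<in> {1..4}" for k
    proof -
      have A: "Av k \<in> Cy" using AC that by simp
      have e1: "{Q1, Av k} \<in> G_edges" "{Q2, Av k} \<in> G_edges" "{Q3, Av k} \<in> G_edges"
        using qadj A by (auto simp: Q1_def Q2_def Q3_def)
      note a1 = adj[OF e1(1) QsG(1) CyG[OF A]] and a2 = adj[OF e1(2) QsG(2) CyG[OF A]]
        and a3 = adj[OF e1(3) QsG(3) CyG[OF A]]
      show "s (Av k) \<le> T'" using a1 a2 a3 by (simp add: T'_def)
      show "s Q1 \<le> t (Av k)" "s Q2 \<le> t (Av k)" "s Q3 \<le> t (Av k)" using a1 a2 a3 by simp_all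
    qed
    define \<beta> where "\<beta> k = min (t (Av k)) T'" for k
    obtain k where k: "k \<in> {1..4}" and kmin: "\<And>m. m \<in> {1..4} \<Longrightarrow> \<beta> k \<le> \<beta> m"
      using ex_has_least_nat[of "\<lambda>k. k \<in> {1..4}" 1 \<beta>] by auto
    define pv where "pv = (if k = 1 then 4 else k - 1)"
    define nx where "nx = nxt k"
    have pvr: "pv \<in> {1..4}" "nxt pv = k" "nx \<in> {1..4}" "pv \<noteq> k" "pv \<noteq> nx" "k \<noteq> nx"
    proof -
      have "k = 1 \<or> k = 2 \<or> k = 3 \<or> k = 4" using k by auto
      then show "pv \<in> {1..4}" "nxt pv = k" "nx \<in> {1..4}" "pv \<noteq> k" "pv \<noteq> nx" "k \<noteq> nx"
        by (auto simp: pv_def nx_def nxt_def)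
    qed
    have AG: "Av m \<in> G_verts" if "m \<in> {1..4}" for m using GV that by simp
    have e1: "{Av k, Av nx} \<in> G_edges" using GE_aa[OF k] by (simp add: nx_def)
    have e2: "{Av pv, Av k} \<in> G_edges" using GE_aa[OF pvr(1)] pvr(2) by simp
    note ad1 = adj[OF e1 AG[OF k] AG[OF pvr(3)]] and ad2 = adj[OF e2 AG[OF pvr(1)] AG[OF k]]
    define \<tau> where "\<tau> = \<beta> k"
    have RL: "R < L" using False by simp
    have T'L: "L \<le> T'" using Qs by (simp add: T'_def)
    have bk: "\<beta> k \<le> \<beta> nx" "\<beta> k \<le> \<beta> pv" using kmin pvr by auto
    have stk: "s (Av k) \<le> t (Av k)" using st(2)[OF AG[OF k]] .
    show ?thesis
    proof (rule FalseE, rule three_q[OF sp _ _ _ _ _ _ _ pvr(1) k pvr(3) pvr(4) pvr(5) pvr(6), of \<tau>])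
      have "\<tau> \<in> I Q1 \<and> \<tau> \<in> I Q2 \<and> \<tau> \<in> I Q3"
        using vis[OF QsG(1)] vis[OF QsG(2)] vis[OF QsG(3)] aQ[OF k] Qs RL T'L
        by (auto simp: \<tau>_def \<beta>_def T'_def)
      then show "\<tau> \<in> I (Qv 1 1)" "\<tau> \<in> I (Qv 1 2)" "\<tau> \<in> I (Qv 2 1)"
        by (simp_all add: Q1_def Q2_def Q3_def)
      show "\<tau> \<in> I (Av k)"
        using vis[OF AG[OF k]] aQ[OF k] stk by (auto simp: \<tau>_def \<beta>_def)
      show "\<tau> \<in> I (Av nx)"
        using vis[OF AG[OF pvr(3)]] aQ[OF pvr(3)] ad1 bk by (auto simp: \<tau>_def \<beta>_def)
      show "\<tau> \<in> I (Av pv)"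
        using vis[OF AG[OF pvr(1)]] aQ[OF pvr(1)] ad2 bk by (auto simp: \<tau>_def \<beta>_def)
      show "\<tau> \<in> {1..l}"
        using bnd[OF AG[OF k]] aQ[OF k] stk by (auto simp: \<tau>_def \<beta>_def)
    qed
  qed
qed

end
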